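(* Let $k\ge2$ and let $u_1,\dots,u_k,v_1,\dots,v_k$ be nonnegative integers with $$u_1<u_2<v_1<u_3<v_2<u_4<v_3<\dots<u_k<v_{k-1}<v_k.$$ Then $$\det F_{\mathbf u,\mathbf v}=(-y)^{\sum_{i=1}^{k-1}(v_i-u_{i+1}+1)}\,q^{\sum_{i=1}^{k-1}\left[\binom{v_i}2-\binom{u_{i+1}-1}2\right]}\cdot F_{u_2-u_1-1}(xq^{u_1},yq^{u_1},q)\,F_{v_k-v_{k-1}-1}(xq^{v_{k-1}+1},yq^{v_{k-1}+1},q)\prod_{i=1}^{k-2}F_{u_{i+2}-v_i-2}(xq^{v_i+1},yq^{v_i+1},q),$$ with the convention $F_{-1}:=0$.
   Context: $F_n(x,y,q)=\sum_{\pi}x^{s(\pi)}y^{d(\pi)}q^{rb(\pi)}$, where: - $\pi$ ranges over layered matchings of $[n]$, i.e. set partitions whose blocks are consecutive intervals $[1,i_1]/\dots/[i_{k-1}+1,n]$ of size $1$ or $2$; - $s(\pi)$ and $d(\pi)$ are the numbers of blocks of size $1$ and $2$; - for $\pi=B_1/\dots/B_k$ with $\min B_1<\dots<\min B_k$, $rb(\pi)$ is the number of pairs $(b,B_j)$ with $b\in B_i$, $j>i$, $\max B_j>b$. Equivalently, $F_0=1$, $F_1=x$, and $F_n=xq^{n-1}F_{n-1}+yq^{n-2}F_{n-2}$ for $n\ge2$. Let $F$ be the infinite matrix with rows and columns indexed by $0,1,2,\dots$. Its $(a,b)$ entry is $F_{b-a}(xq^a,yq^a,q)$ if $b\ge a$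 and $0$ if $b<a$. $F_{\mathbf u,\mathbf v}$ is the $k\times k$ submatrix with rows $u_1<\dots<u_k$ and columns $v_1<\dots<v_k$. $\binom{m}{2}=m(m-1)/2$. *)

theory Defs
  imports "Jordan_Normal_Form.Determinant"
begin

fun Fpoly :: "nat \<Rightarrow> 'a::comm_ring_1 \<Rightarrow> 'a \<Rightarrow> 'a \<Rightarrow> 'a" where
  "Fpoly 0 x y q = 1"
| "Fpoly (Suc 0) x y q = x"
| "Fpoly (Suc (Suc n)) x y q = x * q ^ (Suc n) * Fpoly (Suc n) x y q + y * q ^ n * Fpoly n x y q"

definition Fint :: "int \<Rightarrow> 'a::comm_ring_1 \<Rightarrow> 'a \<Rightarrow> 'a \<Rightarrow> 'a" where
  "Fint n x y q = (if n < 0 then 0 else Fpoly (nat n) x y q)"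

definition Fentry :: "'a::comm_ring_1 \<Rightarrow> 'a \<Rightarrow> 'a \<Rightarrow> nat \<Rightarrow> nat \<Rightarrow> 'a" where
  "Fentry x y q a b = (if a \<le> b then Fpoly (b - a) (x * q ^ a) (y * q ^ a) q else 0)"

definition Fsub :: "'a::comm_ring_1 \<Rightarrow> 'a \<Rightarrow> 'a \<Rightarrow> nat \<Rightarrow> (nat \<Rightarrow> nat) \<Rightarrow> (nat \<Rightarrow> nat) \<Rightarrow> 'a mat" where
  "Fsub x y q k u v = mat k k (\<lambda>(i, j). Fentry x y q (u (i + 1)) (v (j + 1)))"

end

theory Submission
  imports Defs
begin


lemma Fpoly_first:
  "Fpoly (Suc (Suc n)) X Y q = X * Fpoly (Suc n) (X*q) (Y*q) q + Y * Fpoly n (X*q^2) (Y*q^2) q"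
proof (induction n arbitrary: X Y rule: less_induct)
  case (less n)
  show ?case
  proof (cases n)
    case 0 then show ?thesis by (simp add: algebra_simps power2_eq_square)
  next
    case (Suc n1)
    show ?thesis
    proof (cases n1)
      case 0 then show ?thesis using Suc by (simp add: algebra_simps power2_eq_square)
    next
      case (Suc n2)
      define m where "m = n2"
      have n: "n = Suc (Suc m)" using Suc \<open>n = Suc n1\<close> m_def by simp
      have I1: "Fpoly (Suc (Suc (Suc m))) X Y q = X * Fpoly (Suc (Suc m)) (X*q) (Y*q) q + Y * Fpoly (Suc m) (X*q^2) (Y*q^2) q"
        using less[of "Suc m"] n by simp
      have I2: "Fpoly (Suc (Suc m)) X Y q = X * Fpoly (Suc m) (X*q) (Y*q) q + Y * Fpoly m (X*q^2) (Y*q^2) q"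
        using less[of m] n by simp
      have "Fpoly (Suc (Suc n)) X Y q = X * q ^ Suc (Suc (Suc m)) * Fpoly (Suc (Suc (Suc m))) X Y q
          + Y * q ^ Suc (Suc m) * Fpoly (Suc (Suc m)) X Y q" using n by simp
      also have "\<dots> = X * q ^ Suc (Suc (Suc m)) * (X * Fpoly (Suc (Suc m)) (X*q) (Y*q) q + Y * Fpoly (Suc m) (X*q^2) (Y*q^2) q)
          + Y * q ^ Suc (Suc m) * (X * Fpoly (Suc m) (X*q) (Y*q) q + Y * Fpoly m (X*q^2) (Y*q^2) q)"
        unfolding I1 I2 ..
      also have "\<dots> = X * ((X*q) * q ^ Suc (Suc m) * Fpoly (Suc (Suc m)) (X*q) (Y*q) q + (Y*q) * q ^ Suc m * Fpoly (Suc m) (X*q) (Y*q) q)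
          + Y * ((X*q^2) * q ^ Suc m * Fpoly (Suc m) (X*q^2) (Y*q^2) q + (Y*q^2) * q ^ m * Fpoly m (X*q^2) (Y*q^2) q)"
        by (simp add: algebra_simps power2_eq_square)
      also have "\<dots> = X * Fpoly (Suc (Suc (Suc m))) (X*q) (Y*q) q + Y * Fpoly (Suc (Suc m)) (X*q^2) (Y*q^2) q"
        by (simp only: Fpoly.simps)
      finally show ?thesis using n by simp
    qed
  qed
qed

lemma G_first:
  assumes "a < b"
  shows "Fentry x y q a b = x*q^a * Fentry x y q (a+1) b + y*q^a * Fentry x y q (a+2) b"
proof -
  obtain n where n: "b = a + 1 + n" using assms by (metis add_Suc_right less_iff_Suc_add add.commute add_Suc plus_1_eq_Suc)
  show ?thesis
  proof (cases n)
    case 0 then show ?thesis using n by (simp add: Fentry_def)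
  next
    case (Suc m)
    have "Fentry x y q a b = Fpoly (Suc (Suc m)) (x*q^a) (y*q^a) q" using n Suc by (simp add: Fentry_def)
    also have "\<dots> = x*q^a * Fpoly (Suc m) (x*q^a*q) (y*q^a*q) q + y*q^a * Fpoly m (x*q^a*q^2) (y*q^a*q^2) q"
      using Fpoly_first by blast
    also have "\<dots> = x*q^a * Fpoly (Suc m) (x*q^(a+1)) (y*q^(a+1)) q + y*q^a * Fpoly m (x*q^(a+2)) (y*q^(a+2)) q"
      by (simp only: power_add power_one_right mult.assoc)
    finally show ?thesis using n Suc by (simp add: Fentry_def)
  qed
qed

lemma G_diag[simp]: "Fentry x y q a a = 1" by (simp add: Fentry_def)
lemma G_lt: "b < a \<Longrightarrow> Fentry x y q a b = 0" by (simp add: Fentry_def)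
lemma G_Suc: "Fentry x y q a (Suc a) = x * q^a" by (simp add: Fentry_def)

lemma cut_alg: "(X::'a::comm_ring_1)*(A1*Cb + Y*A2*Db) + Y2*(B1*Cb + Y*B2*Db) = (X*A1 + Y2*B1)*Cb + Y*(X*A2 + Y2*B2)*Db"
  by (simp add: algebra_simps)

lemma G_cut:
  assumes "a \<le> c" "c \<le> b" "1 \<le> c"
  shows "Fentry x y q a b = Fentry x y q a c * Fentry x y q c b
     + y * q^(c-1) * Fentry x y q a (c-1) * Fentry x y q (c+1) b"
  using assms
proof (induction "c - a" arbitrary: a rule: less_induct)
  case less
  show ?case
  proof (cases "a = c")
    case True then show ?thesis using less.prems by (simp add: G_lt)
  next
    case False
    hence ac: "a < c" using less.prems by auto
    show ?thesis
    proof (cases "a + 1 = c")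
      case True
      hence c: "c = Suc a" by simp
      show ?thesis using G_first[of a b x y q] ac less.prems unfolding c
        by (simp add: G_Suc)
    next
      case False
      hence a2: "a + 2 \<le> c" using ac by auto
      have IH1: "Fentry x y q (a+1) b = Fentry x y q (a+1) c * Fentry x y q c b
     + y * q^(c-1) * Fentry x y q (a+1) (c-1) * Fentry x y q (c+1) b"
        using less.hyps[of "a+1"] less.prems a2 by auto
      have IH2: "Fentry x y q (a+2) b = Fentry x y q (a+2) c * Fentry x y q c b
     + y * q^(c-1) * Fentry x y q (a+2) (c-1) * Fentry x y q (c+1) b"
        using less.hyps[of "a+2"] less.prems a2 by auto
      have E1: "Fentry x y q a c = x*q^a * Fentry x y q (a+1) c + y*q^a * Fentry x y q (a+2) c"
        using G_first ac by blast
      have E2: "Fentry x y q a (c-1) = x*q^a * Fentry x y q (a+1) (c-1) + y*q^a * Fentry x y q (a+2) (c-1)"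
        using G_first[of a "c-1" x y q] a2 by simp
      have E0: "Fentry x y q a b = x*q^a * Fentry x y q (a+1) b + y*q^a * Fentry x y q (a+2) b"
        using G_first[of a b x y q] ac less.prems by simp
      show ?thesis unfolding E0 E1 E2 IH1 IH2 by (rule cut_alg)
    qed
  qed
qed


definition Mr :: "'a::comm_ring_1 \<Rightarrow> 'a \<Rightarrow> 'a \<Rightarrow> nat \<Rightarrow> (nat\<Rightarrow>nat) \<Rightarrow> (nat\<Rightarrow>nat) \<Rightarrow> 'a mat" where
  "Mr x y q k r c = mat k k (\<lambda>(i,j). Fentry x y q (r i) (c j))"

lemma Mr_carrier[simp]: "Mr x y q k r c \<in> carrier_mat k k" by (simp add: Mr_def)

lemma det_step:
  assumes k: "2 \<le> k"
    and h: "\<forall>j<k. Fentry x y q (r 0) (c j) = \<alpha> * Fentry x y q (r 1) (c j) + \<beta> * Fentry x y q s (c j)"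
  shows "det (Mr x y q k r c) = - \<beta> * det (Mr x y q k (r(0 := r 1, 1 := s)) c)"
proof -
  define M' where "M' = Mr x y q k (r(0 := s)) c"
  have M'c: "M' \<in> carrier_mat k k" by (simp add: M'_def)
  have eq: "Mr x y q k r c = addrow \<alpha> 0 1 (multrow 0 \<beta> M')"
    by (rule eq_matI) (use k h in \<open>auto simp: Mr_def M'_def add.commute\<close>)
  have sw: "swaprows 0 1 M' = Mr x y q k (r(0 := r 1, 1 := s)) c"
    by (rule eq_matI) (use k in \<open>auto simp: Mr_def M'_def\<close>)
  have "det (Mr x y q k r c) = det (multrow 0 \<beta> M')"
    unfolding eq by (rule det_addrow) (use k M'c in auto)
  also have "\<dots> = \<beta> * det M'" by (rule det_multrow) (use k M'c in auto)
  also have "det M' = - det (swaprows 0 1 M')"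
    using det_swaprows[of 0 k 1 M'] k M'c by simp
  finally show ?thesis unfolding sw by simp
qed

lemma det_first_col:
  assumes k: "k = Suc k'"
    and h0: "r 0 = c 0"
    and h: "\<forall>i. 1 \<le> i \<and> i < k \<longrightarrow> c 0 < r i"
  shows "det (Mr x y q k r c) = det (Mr x y q k' (\<lambda>i. r (Suc i)) (\<lambda>j. c (Suc j)))"
proof -
  let ?M = "Mr x y q k r c"
  have "det ?M = (\<Sum>i<k. ?M $$ (i,0) * cofactor ?M i 0)"
    by (rule laplace_expansion_column) (use k in auto)
  also have "\<dots> = ?M $$ (0,0) * cofactor ?M 0 0 + (\<Sum>i<k'. ?M $$ (Suc i,0) * cofactor ?M (Suc i) 0)"
    unfolding k by (rule sum.lessThan_Suc_shift)
  also have "(\<Sum>i<k'. ?M $$ (Suc i,0) * cofactor ?M (Suc i) 0) = 0"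
    using h k by (auto simp: Mr_def G_lt intro!: sum.neutral)
  also have "?M $$ (0,0) = 1" using h0 k by (simp add: Mr_def)
  also have "cofactor ?M 0 0 = det (mat_delete ?M 0 0)" by (simp add: cofactor_def)
  also have "mat_delete ?M 0 0 = Mr x y q k' (\<lambda>i. r (Suc i)) (\<lambda>j. c (Suc j))"
    by (rule eq_matI) (use k in \<open>auto simp: Mr_def mat_delete_def\<close>)
  finally show ?thesis by simp
qed


lemma det_iter:
  assumes k: "2 \<le> k" and h: "\<forall>j<k. a + m \<le> c j"
  shows "det (Mr x y q k (r(0:=a, 1:=a+1)) c)
     = (-y)^m * q^(\<Sum>i<m. a+i) * det (Mr x y q k (r(0:=a+m, 1:=a+m+1)) c)"
  using h
proof (induction m arbitrary: a)
  case 0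
  then show ?case by simp
next
  case (Suc m)
  let ?r = "r(0:=a, 1:=a+1)"
  have hs: "\<forall>j<k. Fentry x y q (?r 0) (c j) = (x*q^a) * Fentry x y q (?r 1) (c j) + (y*q^a) * Fentry x y q (a+2) (c j)"
  proof (intro allI impI)
    fix j assume "j < k"
    hence "a < c j" using Suc.prems by fastforce
    thus "Fentry x y q (?r 0) (c j) = (x*q^a) * Fentry x y q (?r 1) (c j) + (y*q^a) * Fentry x y q (a+2) (c j)"
      using G_first[of a "c j" x y q] by simp
  qed
  have upd: "?r(0 := ?r 1, 1 := a+2) = r(0 := a+1, 1 := (a+1)+1)"
    by (rule ext) simp
  have r2: "r(0:=(a+1)+m, 1:=(a+1)+m+1) = r(0:=a+Suc m, 1:=a+Suc m+1)" by simp
  have "det (Mr x y q k ?r c) = - (y*q^a) * det (Mr x y q k (?r(0 := ?r 1, 1 := a+2)) c)"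
    by (rule det_step[OF k hs])
  also have "\<dots> = - (y*q^a) * det (Mr x y q k (r(0 := a+1, 1 := (a+1)+1)) c)" unfolding upd ..
  also have "det (Mr x y q k (r(0 := a+1, 1 := (a+1)+1)) c)
     = (-y)^m * q^(\<Sum>i<m. (a+1)+i) * det (Mr x y q k (r(0:=(a+1)+m, 1:=(a+1)+m+1)) c)"
    by (rule Suc.IH) (use Suc.prems in auto)
  also have "(\<Sum>i<m. (a+1)+i) = (\<Sum>i<Suc m. a+i) - a"
    unfolding sum.lessThan_Suc_shift by simp
  finally have "det (Mr x y q k ?r c) = - (y*q^a) * ((-y)^m * q^((\<Sum>i<Suc m. a+i) - a)
     * det (Mr x y q k (r(0:=a+Suc m, 1:=a+Suc m+1)) c))" unfolding r2 .
  moreover have e: "(\<Sum>i<Suc m. a+i) = a + ((\<Sum>i<Suc m. a+i) - a)"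
    unfolding sum.lessThan_Suc_shift by simp
  ultimately show ?case
  proof -
    assume A: "det (Mr x y q k ?r c) = - (y*q^a) * ((-y)^m * q^((\<Sum>i<Suc m. a+i) - a)
     * det (Mr x y q k (r(0:=a+Suc m, 1:=a+Suc m+1)) c))"
    assume e: "(\<Sum>i<Suc m. a+i) = a + ((\<Sum>i<Suc m. a+i) - a)"
    define S where "S = (\<Sum>i<Suc m. a+i) - a"
    define D where "D = det (Mr x y q k (r(0:=a+Suc m, 1:=a+Suc m+1)) c)"
    have "(-y)^Suc m * q^(\<Sum>i<Suc m. a+i) * D = (-y)^Suc m * q^(a + S) * D"
      unfolding S_def by (simp only: e[symmetric])
    also have "\<dots> = - (y*q^a) * ((-y)^m * q^S * D)" by (simp add: power_add algebra_simps)
    finally have F: "(-y)^Suc m * q^(\<Sum>i<Suc m. a+i) * D = - (y*q^a) * ((-y)^m * q^S * D)" .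
    have A': "det (Mr x y q k ?r c) = - (y*q^a) * ((-y)^m * q^S * D)" using A unfolding S_def D_def .
    show ?thesis unfolding D_def[symmetric] using A' F[symmetric] by (rule trans)
  qed
qed


lemma det_core:
  assumes k: "2 \<le> k" and h0: "r 0 \<le> r 1" and h1: "1 \<le> r 1" and h2: "r 1 < c 0"
    and hc: "\<forall>j<k. c 0 \<le> c j" and hr: "\<forall>i. 2 \<le> i \<and> i < k \<longrightarrow> c 0 < r i"
  shows "det (Mr x y q k r c) = (-y)^(c 0 - r 1 + 1) * q^(\<Sum>i<c 0 - r 1 + 1. (r 1 - 1) + i)
     * Fentry x y q (r 0) (r 1 - 1)
     * det (Mr x y q (k-1) (\<lambda>i. if i = 0 then c 0 + 1 else r (Suc i)) (\<lambda>j. c (Suc j)))"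
proof -
  define m where "m = c 0 - r 1"
  define a where "a = r 1"
  define \<beta> where "\<beta> = y * q^(a-1) * Fentry x y q (r 0) (a-1)"
  have am: "a + m = c 0" using h2 unfolding m_def a_def by simp
  have hs: "\<forall>j<k. Fentry x y q (r 0) (c j) = Fentry x y q (r 0) a * Fentry x y q (r 1) (c j) + \<beta> * Fentry x y q (a+1) (c j)"
  proof (intro allI impI)
    fix j assume "j < k"
    hence "a \<le> c j" using hc h2 unfolding a_def by fastforce
    thus "Fentry x y q (r 0) (c j) = Fentry x y q (r 0) a * Fentry x y q (r 1) (c j) + \<beta> * Fentry x y q (a+1) (c j)"
      using G_cut[of "r 0" a "c j" x y q] h0 h1 unfolding a_def \<beta>_def by simp
  qed
  have u1: "r(0 := r 1, 1 := a+1) = r(0 := a, 1 := a+1)" unfolding a_def by simp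
  have "det (Mr x y q k r c) = - \<beta> * det (Mr x y q k (r(0 := r 1, 1 := a+1)) c)"
    by (rule det_step[OF k hs])
  also have "\<dots> = - \<beta> * det (Mr x y q k (r(0 := a, 1 := a+1)) c)" unfolding u1 ..
  also have "det (Mr x y q k (r(0 := a, 1 := a+1)) c)
       = (-y)^m * q^(\<Sum>i<m. a+i) * det (Mr x y q k (r(0:=a+m, 1:=a+m+1)) c)"
    by (rule det_iter[OF k]) (use hc am in auto)
  also have "det (Mr x y q k (r(0:=a+m, 1:=a+m+1)) c)
       = det (Mr x y q (k-1) (\<lambda>i. (r(0:=a+m, 1:=a+m+1)) (Suc i)) (\<lambda>j. c (Suc j)))"
    by (rule det_first_col) (use k am hr in auto)
  also have "(\<lambda>i. (r(0:=a+m, 1:=a+m+1)) (Suc i)) = (\<lambda>i. if i = 0 then c 0 + 1 else r (Suc i))"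
    using am by (auto simp: fun_eq_iff)
  finally have A: "det (Mr x y q k r c) = - \<beta> * ((-y)^m * q^(\<Sum>i<m. a+i) *
       det (Mr x y q (k-1) (\<lambda>i. if i = 0 then c 0 + 1 else r (Suc i)) (\<lambda>j. c (Suc j))))" .
  have e: "(\<Sum>i<c 0 - r 1 + 1. (r 1 - 1) + i) = (a - 1) + (\<Sum>i<m. a+i)"
  proof -
    have "(\<Sum>i<Suc m. (a - 1) + i) = ((a-1)+0) + (\<Sum>i<m. (a-1) + Suc i)"
      by (rule sum.lessThan_Suc_shift)
    also have "(\<Sum>i<m. (a-1) + Suc i) = (\<Sum>i<m. a + i)"
      using h1 unfolding a_def by (intro sum.cong) auto
    finally show ?thesis unfolding m_def a_def by simp
  qed
  have e2: "c 0 - r 1 + 1 = Suc m" unfolding m_def by simp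
  define D where "D = det (Mr x y q (k-1) (\<lambda>i. if i = 0 then c 0 + 1 else r (Suc i)) (\<lambda>j. c (Suc j)))"
  define T where "T = (\<Sum>i<m. a+i)"
  define G where "G = Fentry x y q (r 0) (a - 1)"
  have "- \<beta> * ((-y)^m * q^T * D) = (-y)^(Suc m) * q^((a - 1) + T) * G * D"
    unfolding \<beta>_def G_def by (simp add: power_add algebra_simps)
  then show ?thesis using A unfolding e unfolding e2 D_def[symmetric] T_def[symmetric] G_def[symmetric] a_def[symmetric]
    by (simp add: m_def a_def)
qed


definition W :: "'a::comm_ring_1 \<Rightarrow> 'a \<Rightarrow> 'a \<Rightarrow> nat \<Rightarrow> nat \<Rightarrow> 'a" where
  "W x y q a b = (-y)^(b - a + 1) * q^(\<Sum>i<b - a + 1. (a - 1) + i)"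

lemma det1: "det (Mr x y q 1 r c) = Fentry x y q (r 0) (c 0)"
proof -
  let ?M = "Mr x y q 1 r c"
  have "det ?M = (\<Sum>i<1. ?M $$ (i,0) * cofactor ?M i 0)"
    by (rule laplace_expansion_column) auto
  also have "\<dots> = ?M $$ (0,0) * det (mat_delete ?M 0 0)" by (simp add: cofactor_def)
  also have "det (mat_delete ?M 0 0) = 1"
    by (rule det_dim_zero) (simp add: mat_delete_def Mr_def)
  finally show ?thesis by (simp add: Mr_def)
qed

lemma mono_facts:
  fixes k :: nat and r c :: "nat \<Rightarrow> nat"
  assumes k: "2 \<le> k" and A: "\<forall>i<k-1. r(i+1) < c i" and B: "\<forall>i<k-2. c i < r(i+2)"
    and C: "c(k-2) < c(k-1)"
  shows "\<forall>j<k. c 0 \<le> c j" "\<forall>i. 2 \<le> i \<and> i < k \<longrightarrow> c 0 < r i"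
proof -
  have st: "c i < c (Suc i)" if "Suc i < k" for i
  proof (cases "i < k - 2")
    case True
    moreover have "Suc i < k - 1" using True by arith
    ultimately show ?thesis using A[rule_format, of "Suc i"] B[rule_format, of i] by simp
  next
    case False
    then have "i = k - 2" using that by simp
    then show ?thesis using C k by (simp add: Suc_diff_Suc numeral_2_eq_2)
  qed
  have m: "c 0 \<le> c j" if "j < k" for j
    using that
  proof (induction j)
    case 0 then show ?case by simp
  next
    case (Suc j) then show ?case using st[of j] by simp
  qed
  show "\<forall>j<k. c 0 \<le> c j" using m by blast
  show "\<forall>i. 2 \<le> i \<and> i < k \<longrightarrow> c 0 < r i"
  proof (intro allI impI)
    fix i assume i: "2 \<le> i \<and> i < k"
    have "i - 2 < k - 2" using i by arith
    then have "c (i-2) < r (i-2+2)" using B by blast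
    moreover have "i-2+2 = i" using i by arith
    ultimately have "c (i-2) < r i" by simp
    moreover have "c 0 \<le> c (i-2)" using m[of "i-2"] i by arith
    ultimately show "c 0 < r i" by simp
  qed
qed

lemma det_main:
  assumes k: "2 \<le> k" and h0: "r 0 \<le> r 1" and h1: "1 \<le> r 1"
    and A: "\<forall>i<k-1. r(i+1) < c i" and B: "\<forall>i<k-2. c i < r(i+2)" and C: "c(k-2) < c(k-1)"
  shows "det (Mr x y q k r c) = (\<Prod>i<k-1. W x y q (r(i+1)) (c i)) * Fentry x y q (r 0) (r 1 - 1)
     * Fentry x y q (c(k-2)+1) (c(k-1)) * (\<Prod>i<k-2. Fentry x y q (c i + 1) (r(i+2) - 1))"
  using k h0 h1 A B C
proof (induction k arbitrary: r c rule: nat_induct_at_least)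
  case base
  have core: "det (Mr x y q 2 r c) = W x y q (r 1) (c 0) * Fentry x y q (r 0) (r 1 - 1)
     * det (Mr x y q 1 (\<lambda>i. if i = 0 then c 0 + 1 else r (Suc i)) (\<lambda>j. c (Suc j)))"
  proof -
    have "det (Mr x y q 2 r c) = W x y q (r 1) (c 0) * Fentry x y q (r 0) (r 1 - 1)
     * det (Mr x y q (2-1) (\<lambda>i. if i = 0 then c 0 + 1 else r (Suc i)) (\<lambda>j. c (Suc j)))"
      unfolding W_def by (rule det_core) (use mono_facts[of 2 r c] base in auto)
    then show ?thesis by simp
  qed
  show ?case unfolding core det1 by simp
next
  case (Suc n)
  note mf = mono_facts[of "Suc n" r c]
  define r' where "r' = (\<lambda>i. if i = 0 then c 0 + 1 else r (Suc i))"
  define c' where "c' = (\<lambda>j. c (Suc j))"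
  have core: "det (Mr x y q (Suc n) r c) = W x y q (r 1) (c 0) * Fentry x y q (r 0) (r 1 - 1)
     * det (Mr x y q n r' c')"
  proof -
    have "det (Mr x y q (Suc n) r c) = W x y q (r 1) (c 0) * Fentry x y q (r 0) (r 1 - 1)
     * det (Mr x y q (Suc n - 1) r' c')"
      unfolding W_def r'_def c'_def by (rule det_core) (use mf Suc.prems Suc.hyps in auto)
    then show ?thesis by (simp only: diff_Suc_1)
  qed
  obtain p where p: "n = Suc (Suc p)" using Suc.hyps by (metis add_2_eq_Suc le_Suc_ex)
  have IH: "det (Mr x y q n r' c') = (\<Prod>i<n-1. W x y q (r'(i+1)) (c' i)) * Fentry x y q (r' 0) (r' 1 - 1)
     * Fentry x y q (c'(n-2)+1) (c'(n-1)) * (\<Prod>i<n-2. Fentry x y q (c' i + 1) (r'(i+2) - 1))"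
  proof (rule Suc.IH)
    show "r' 0 \<le> r' 1" using Suc.prems(4) p unfolding r'_def by (auto simp: numeral_2_eq_2)
    show "1 \<le> r' 1" using Suc.prems(4) p unfolding r'_def by (auto simp: numeral_2_eq_2)
    show "\<forall>i<n-1. r'(i+1) < c' i" using Suc.prems(3) p unfolding r'_def c'_def by auto
    show "\<forall>i<n-2. c' i < r'(i+2)" using Suc.prems(4) p unfolding r'_def c'_def by auto
    show "c'(n-2) < c'(n-1)" using Suc.prems(5) p unfolding c'_def by simp
  qed
  show ?case unfolding core IH unfolding p
    by (simp del: prod.lessThan_Suc add: prod.lessThan_Suc_shift r'_def c'_def algebra_simps)
qed


lemma choose2_Suc: "(Suc n choose 2) = (n choose 2) + n"
  by (simp add: numeral_2_eq_2)

lemma sum_choose2: "(\<Sum>j<m. s + j) + (s choose 2) = ((s + m) choose 2)"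
  by (induction m) (simp_all add: choose2_Suc)

lemma W_alt:
  assumes "1 \<le> a" "a \<le> b"
  shows "W x y q a b = (-y)^(b - a + 1) * q^((b choose 2) - ((a - 1) choose 2))"
proof -
  have "(\<Sum>j<b - a + 1. (a - 1) + j) + ((a - 1) choose 2) = (((a - 1) + (b - a + 1)) choose 2)"
    by (rule sum_choose2)
  also have "(a - 1) + (b - a + 1) = b" using assms by simp
  finally have "(\<Sum>j<b - a + 1. (a - 1) + j) = (b choose 2) - ((a - 1) choose 2)" by linarith
  then show ?thesis unfolding W_def by simp
qed

theorem theorem5p4:
  fixes x y q :: "'a::comm_ring_1" and k :: nat and u v :: "nat \<Rightarrow> nat"
  assumes "k \<ge> 2"
    and "u 1 < u 2"
    and "\<forall>i\<in>{1..k-1}. u (i + 1) < v i"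
    and "\<forall>i\<in>{1..k-2}. v i < u (i + 2)"
    and "v (k - 1) < v k"
  shows "det (Fsub x y q k u v) =
    (- y) ^ (\<Sum>i=1..k-1. v i - u (i + 1) + 1)
    * q ^ (\<Sum>i=1..k-1. (v i choose 2) - ((u (i + 1) - 1) choose 2))
    * Fint (int (u 2) - int (u 1) - 1) (x * q ^ u 1) (y * q ^ u 1) q
    * Fint (int (v k) - int (v (k - 1)) - 1) (x * q ^ (v (k - 1) + 1)) (y * q ^ (v (k - 1) + 1)) q
    * (\<Prod>i=1..k-2. Fint (int (u (i + 2)) - int (v i) - 2) (x * q ^ (v i + 1)) (y * q ^ (v i + 1)) q)"
proof -
  note k = assms(1) and h12 = assms(2) and hA = assms(3) and hB = assms(4) and hC = assms(5)
  define r where "r = (\<lambda>i. u (i+1))"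
  define c where "c = (\<lambda>j. v (j+1))"
  have M: "Fsub x y q k u v = Mr x y q k r c" by (simp add: Fsub_def Mr_def r_def c_def)
  have D: "det (Mr x y q k r c) = (\<Prod>i<k-1. W x y q (r(i+1)) (c i)) * Fentry x y q (r 0) (r 1 - 1)
     * Fentry x y q (c(k-2)+1) (c(k-1)) * (\<Prod>i<k-2. Fentry x y q (c i + 1) (r(i+2) - 1))"
  proof (rule det_main[OF k])
    show "r 0 \<le> r 1" "1 \<le> r 1" using h12 unfolding r_def by (auto simp: numeral_2_eq_2)
    show "\<forall>i<k-1. r(i+1) < c i"
    proof (intro allI impI)
      fix i assume "i < k - 1"
      then have "Suc i \<in> {1..k-1}" by simp
      then show "r(i+1) < c i" using hA unfolding r_def c_def by auto
    qed
    show "\<forall>i<k-2. c i < r(i+2)"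
    proof (intro allI impI)
      fix i assume "i < k - 2"
      then have "Suc i \<in> {1..k-2}" by simp
      then show "c i < r(i+2)" using hB unfolding r_def c_def by auto
    qed
    have "k - 2 + 1 = k - 1" "k - 1 + 1 = k" using k by arith+
    then show "c(k-2) < c(k-1)" using hC unfolding c_def by simp
  qed
  have P1: "(- y) ^ (\<Sum>i=1..k-1. v i - u (i + 1) + 1)
    * q ^ (\<Sum>i=1..k-1. (v i choose 2) - ((u (i + 1) - 1) choose 2)) = (\<Prod>i<k-1. W x y q (r(i+1)) (c i))"
  proof -
    have "(- y) ^ (\<Sum>i=1..k-1. v i - u (i + 1) + 1)
       * q ^ (\<Sum>i=1..k-1. (v i choose 2) - ((u (i + 1) - 1) choose 2))
       = (\<Prod>i=1..k-1. (- y) ^ (v i - u (i + 1) + 1) * q ^ ((v i choose 2) - ((u (i + 1) - 1) choose 2)))"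
      by (simp only: power_sum prod.distrib)
    also have "\<dots> = (\<Prod>i=1..k-1. W x y q (u (i+1)) (v i))"
    proof (rule prod.cong)
      fix i assume "i \<in> {1..k-1}"
      then have i: "u (i+1) < v i" "1 \<le> i" "i \<le> k - 1" using hA by auto
      have "1 \<le> u (i+1)"
      proof (cases "i = 1")
        case True then show ?thesis using h12 by (simp add: numeral_2_eq_2)
      next
        case False
        then have "i - 1 \<in> {1..k-2}" "i - 1 + 2 = i + 1" using i by auto
        then have "v (i-1) < u (i+1)" using hB by metis
        then show ?thesis by simp
      qed
      note i = i this
      then show "(- y) ^ (v i - u (i + 1) + 1) * q ^ ((v i choose 2) - ((u (i + 1) - 1) choose 2))
         = W x y q (u (i+1)) (v i)" using i by (simp add: W_alt)
    qed simp
    also have "\<dots> = (\<Prod>i<k-1. W x y q (u (Suc i+1)) (v (Suc i)))"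
      using prod.atLeast1_atMost_eq[of "\<lambda>i. W x y q (u (i+1)) (v i)" "k-1"] by simp
    finally show ?thesis unfolding r_def c_def by simp
  qed
  have P2: "Fint (int (u 2) - int (u 1) - 1) (x * q ^ u 1) (y * q ^ u 1) q = Fentry x y q (r 0) (r 1 - 1)"
  proof -
    have "nat (int (u 2) - int (u 1) - 1) = u 2 - 1 - u 1" using h12 by arith
    then show ?thesis using h12 unfolding r_def Fint_def Fentry_def by (simp add: numeral_2_eq_2)
  qed
  have P3: "Fint (int (v k) - int (v (k - 1)) - 1) (x * q ^ (v (k - 1) + 1)) (y * q ^ (v (k - 1) + 1)) q
     = Fentry x y q (c(k-2)+1) (c(k-1))"
  proof -
    have e: "k - 2 + 1 = k - 1" "k - 1 + 1 = k" using k by arith+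
    have "nat (int (v k) - int (v (k-1)) - 1) = v k - (v (k-1) + 1)" using hC by arith
    then show ?thesis using hC unfolding c_def Fint_def Fentry_def e by simp
  qed
  have P4: "(\<Prod>i=1..k-2. Fint (int (u (i + 2)) - int (v i) - 2) (x * q ^ (v i + 1)) (y * q ^ (v i + 1)) q)
     = (\<Prod>i<k-2. Fentry x y q (c i + 1) (r(i+2) - 1))"
  proof -
    have "(\<Prod>i=1..k-2. Fint (int (u (i + 2)) - int (v i) - 2) (x * q ^ (v i + 1)) (y * q ^ (v i + 1)) q)
       = (\<Prod>i=1..k-2. Fentry x y q (v i + 1) (u (i+2) - 1))"
    proof (rule prod.cong)
      fix i assume "i \<in> {1..k-2}"
      then have lt: "v i < u (i+2)" using hB by auto
      show "Fint (int (u (i + 2)) - int (v i) - 2) (x * q ^ (v i + 1)) (y * q ^ (v i + 1)) q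
         = Fentry x y q (v i + 1) (u (i+2) - 1)"
      proof (cases "u (i+2) = v i + 1")
        case True then show ?thesis unfolding Fint_def Fentry_def by simp
      next
        case False
        then have "nat (int (u (i + 2)) - int (v i) - 2) = u (i+2) - 1 - (v i + 1)" using lt by arith
        then show ?thesis using lt False unfolding Fint_def Fentry_def by simp
      qed
    qed simp
    also have "\<dots> = (\<Prod>i<k-2. Fentry x y q (v (Suc i) + 1) (u (Suc i+2) - 1))"
      using prod.atLeast1_atMost_eq[of "\<lambda>i. Fentry x y q (v i + 1) (u (i+2) - 1)" "k-2"] by simp
    finally show ?thesis unfolding r_def c_def by simp
  qed
  show ?thesis unfolding M D P1 P2 P3 P4 ..
qed

end
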